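(* Let $G$ be a finite $(n+1)$-partite graph with ordered parts $(V^0,\ldots,V^n)$ which is partite type-regular. Then its symmetrization $G^{\circledast S_{n+1}}=\circledast_{\pi\in S_{n+1}}\pi(G)$ is hyper-regular, i.e. for every $1\le m\le n$ all cliques of size $m$ in $G^{\circledast S_{n+1}}$ have joint neighbourhoods of the same size.
   Context: Let $I=\{0,\ldots,n\}$. For an $(n+1)$-partite graph with parts $(V^i)_{i\in I}$ and $J\subseteq I$, a clique is of type $J$ if it has exactly one vertex in $V^j$ for each $j\in J$ and no others. The link of a clique $C$ is the set of vertices adjacent to all vertices of $C$. $G$ is partite type-regular if for every $J\subsetneq I$ and $i\in I\setminus J$ there is $d_J(i)\in\mathbb{N}$ with $|V^i\cap\mathrm{link}(C)|=d_J(i)$ for every clique $C$ of type $J$. Partite product: for $(n+1)$-partite $G_1,G_2$, $G_1\circledast G_2$ has ordered parts $(V_1^i\times V_2^i)_{i\in I}$ and $(a,b)\in V_1^i\times V_2^i$, $(c,d)\in V_1^j\times V_2^j$ ($i\neq j$) are adjacent iff $\{a,c\}\in E_1$ and $\{b,d\}\in E_2$; iterating gives $\circledast$ of finitely many graphs. For $\pi\in S_{n+1}$ (permutations of $I$), $\pi(G)$ is the same graph with ordered parts $(V^{\pi(0)},\ldots,V^{\pi(n)})$. Hyper-regularity (as in the paper): $G$ is $(d_0,\ldots,d_{n-1})$-regular if it is $d_0$-regular and for each $1\le i\le n-1$ the subgraph induced on the joint neighbourhood of every $i$-clique is $d_i$-regular; equivalently, for each $1\le m\le n$ the joint neighbourhood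 of every clique of size $m$ has the same size $d_{m-1}$. *)

theory Defs
  imports "HOL-Combinatorics.Permutations"
begin

definition partite_graph :: "nat \<Rightarrow> (nat \<Rightarrow> 'a set) \<Rightarrow> ('a \<Rightarrow> 'a \<Rightarrow> bool) \<Rightarrow> bool" where
  "partite_graph n V E \<longleftrightarrow>
     (\<forall>i\<le>n. \<forall>j\<le>n. i \<noteq> j \<longrightarrow> V i \<inter> V j = {}) \<and>
     (\<forall>x y. E x y \<longleftrightarrow> E y x) \<and>
     (\<forall>x y. E x y \<longrightarrow> (\<exists>i\<le>n. \<exists>j\<le>n. i \<noteq> j \<and> x \<in> V i \<and> y \<in> V j))"

definition verts :: "nat \<Rightarrow> (nat \<Rightarrow> 'a set) \<Rightarrow> 'a set" where
  "verts n V = (\<Union>i\<le>n. V i)"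

definition is_clique :: "('a \<Rightarrow> 'a \<Rightarrow> bool) \<Rightarrow> 'a set \<Rightarrow> bool" where
  "is_clique E C \<longleftrightarrow> (\<forall>x\<in>C. \<forall>y\<in>C. x \<noteq> y \<longrightarrow> E x y)"

definition link :: "'a set \<Rightarrow> ('a \<Rightarrow> 'a \<Rightarrow> bool) \<Rightarrow> 'a set \<Rightarrow> 'a set" where
  "link Vs E C = {v \<in> Vs. \<forall>c\<in>C. E v c}"

definition clique_of_type :: "nat \<Rightarrow> (nat \<Rightarrow> 'a set) \<Rightarrow> ('a \<Rightarrow> 'a \<Rightarrow> bool) \<Rightarrow> nat set \<Rightarrow> 'a set \<Rightarrow> bool" where
  "clique_of_type n V E J C \<longleftrightarrow>
     C \<subseteq> verts n V \<and> is_clique E C \<and>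
     (\<forall>j\<in>J. card (C \<inter> V j) = 1) \<and> (\<forall>j\<in>{..n} - J. C \<inter> V j = {})"

definition partite_type_regular :: "nat \<Rightarrow> (nat \<Rightarrow> 'a set) \<Rightarrow> ('a \<Rightarrow> 'a \<Rightarrow> bool) \<Rightarrow> bool" where
  "partite_type_regular n V E \<longleftrightarrow>
     (\<forall>J i. J \<subset> {..n} \<longrightarrow> i \<in> {..n} - J \<longrightarrow>
        (\<exists>d::nat. \<forall>C. clique_of_type n V E J C \<longrightarrow> card (V i \<inter> link (verts n V) E C) = d))"

text \<open>Symmetrization: the partite product of pi(G) over all permutations pi of {..n}.
  A vertex of part i is a tuple indexed by permutations, i.e. an (extensional) function
  f with f pi in V (pi i) for every permutation pi.\<close>
definition sym_part :: "nat \<Rightarrow> (nat \<Rightarrow> 'a set) \<Rightarrow> nat \<Rightarrow> ((nat \<Rightarrow> nat) \<Rightarrow> 'a) set" where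
  "sym_part n V i = {f. (\<forall>\<pi>. \<pi> permutes {..n} \<longrightarrow> f \<pi> \<in> V (\<pi> i)) \<and>
                        (\<forall>\<pi>. \<not> \<pi> permutes {..n} \<longrightarrow> f \<pi> = undefined)}"

definition sym_edge :: "nat \<Rightarrow> (nat \<Rightarrow> 'a set) \<Rightarrow> ('a \<Rightarrow> 'a \<Rightarrow> bool) \<Rightarrow>
    ((nat \<Rightarrow> nat) \<Rightarrow> 'a) \<Rightarrow> ((nat \<Rightarrow> nat) \<Rightarrow> 'a) \<Rightarrow> bool" where
  "sym_edge n V E f g \<longleftrightarrow>
     (\<exists>i\<le>n. \<exists>j\<le>n. i \<noteq> j \<and> f \<in> sym_part n V i \<and> g \<in> sym_part n V j \<and>
        (\<forall>\<pi>. \<pi> permutes {..n} \<longrightarrow> E (f \<pi>) (g \<pi>)))"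

definition hyper_regular :: "nat \<Rightarrow> 'b set \<Rightarrow> ('b \<Rightarrow> 'b \<Rightarrow> bool) \<Rightarrow> bool" where
  "hyper_regular n Vs E \<longleftrightarrow>
     (\<forall>m. 1 \<le> m \<and> m \<le> n \<longrightarrow>
        (\<exists>d::nat. \<forall>C. C \<subseteq> Vs \<and> is_clique E C \<and> card C = m \<longrightarrow> card (link Vs E C) = d))"

end

theory Submission imports Defs begin

lemma exists_perm:
  fixes J J' :: "nat set"
  assumes "J \<subseteq> {..n}" "J' \<subseteq> {..n}" "card J = card J'" "i \<le> n" "i' \<le> n" "i \<notin> J" "i' \<notin> J'"
  shows "\<exists>\<tau>. \<tau> permutes {..n} \<and> \<tau> ` J' = J \<and> \<tau> i' = i"
proof -
  have fJ: "finite J" "finite J'" using assms(1,2) finite_subset by blast+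
  obtain b where b: "bij_betw b J' J" using finite_same_card_bij[OF fJ(2) fJ(1)] assms(3) by auto
  define h where "h = b(i' := i)"
  have h: "bij_betw h (insert i' J') (insert i J)"
  proof -
    have "bij_betw h J' J \<longleftrightarrow> bij_betw b J' J"
      by (rule bij_betw_cong) (use assms(7) in \<open>auto simp: h_def\<close>)
    then have 1: "bij_betw h J' J" using b by simp
    have 2: "bij_betw h {i'} {i}" by (simp add: h_def)
    have "bij_betw h (J' \<union> {i'}) (J \<union> {i})" using bij_betw_combine[OF 1 2] assms(6) by auto
    then show ?thesis by simp
  qed
  have c1: "card ({..n} - insert i' J') = card ({..n} - insert i J)"
    using assms fJ by (simp add: card_Diff_subset)
  obtain k where k: "bij_betw k ({..n} - insert i' J') ({..n} - insert i J)"
    using finite_same_card_bij[OF _ _ c1] by auto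
  define \<tau> where "\<tau> x = (if x \<in> insert i' J' then h x else if x \<le> n then k x else x)" for x
  have "bij_betw \<tau> (insert i' J') (insert i J)"
    using h bij_betw_cong[of "insert i' J'" \<tau> h] by (simp add: \<tau>_def)
  moreover have "bij_betw \<tau> ({..n} - insert i' J') ({..n} - insert i J)"
    using k bij_betw_cong[of "{..n} - insert i' J'" \<tau> k] by (simp add: \<tau>_def)
  ultimately have "bij_betw \<tau> (insert i' J' \<union> ({..n} - insert i' J')) (insert i J \<union> ({..n} - insert i J))"
    by (rule bij_betw_combine) auto
  moreover have "insert i' J' \<union> ({..n} - insert i' J') = {..n}" "insert i J \<union> ({..n} - insert i J) = {..n}"
    using assms by auto
  ultimately have "bij_betw \<tau> {..n} {..n}" by simp
  then have "\<tau> permutes {..n}" by (rule bij_imp_permutes) (use assms in \<open>auto simp: \<tau>_def\<close>)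
  moreover have "\<tau> ` J' = J"
  proof -
    have "\<tau> ` J' = h ` J'" by (auto simp: \<tau>_def)
    also have "... = b ` J'" using assms(7) by (auto simp: h_def)
    finally show ?thesis using b by (simp add: bij_betw_def)
  qed
  moreover have "\<tau> i' = i" by (simp add: \<tau>_def h_def)
  ultimately show ?thesis by blast
qed

lemma sym_part_PiE: "sym_part n V i = PiE {\<pi>. \<pi> permutes {..n}} (\<lambda>\<pi>. V (\<pi> i))"
  unfolding sym_part_def PiE_def Pi_def extensional_def by auto

lemma id_in_P: "id permutes {..n}" by (rule permutes_id)

context
  fixes n :: nat and V :: "nat \<Rightarrow> 'a set" and E :: "'a \<Rightarrow> 'a \<Rightarrow> bool"
  assumes pg: "partite_graph n V E"
begin

lemma Vdisj: "i \<le> n \<Longrightarrow> j \<le> n \<Longrightarrow> x \<in> V i \<Longrightarrow> x \<in> V j \<Longrightarrow> i = j"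
  using pg unfolding partite_graph_def by blast

lemma no_edge_same: "E x y \<Longrightarrow> x \<in> V i \<Longrightarrow> y \<in> V i \<Longrightarrow> i \<le> n \<Longrightarrow> False"
  using pg unfolding partite_graph_def by (metis Vdisj)

lemma sym_part_id: "f \<in> sym_part n V i \<Longrightarrow> f id \<in> V i"
  unfolding sym_part_def using permutes_id by fastforce

lemma sym_part_app: "f \<in> sym_part n V i \<Longrightarrow> \<pi> permutes {..n} \<Longrightarrow> f \<pi> \<in> V (\<pi> i)"
  unfolding sym_part_def by blast

lemma sym_part_disj: "i \<le> n \<Longrightarrow> j \<le> n \<Longrightarrow> f \<in> sym_part n V i \<Longrightarrow> f \<in> sym_part n V j \<Longrightarrow> i = j"
  using sym_part_id Vdisj by blast

lemma sym_edge_same: "i \<le> n \<Longrightarrow> f \<in> sym_part n V i \<Longrightarrow> g \<in> sym_part n V i \<Longrightarrow> \<not> sym_edge n V E f g"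
  unfolding sym_edge_def using permutes_id sym_part_id no_edge_same by blast

lemma sym_edge_E: "sym_edge n V E f g \<Longrightarrow> \<pi> permutes {..n} \<Longrightarrow> E (f \<pi>) (g \<pi>)"
  unfolding sym_edge_def by blast

lemma finite_sym_part: "\<forall>i\<le>n. finite (V i) \<Longrightarrow> i \<le> n \<Longrightarrow> finite (sym_part n V i)"
  unfolding sym_part_PiE
  by (rule finite_PiE) (auto simp: finite_permutations dest!: permutes_in_image[THEN iffD2])

definition ctype :: "((nat \<Rightarrow> nat) \<Rightarrow> 'a) set \<Rightarrow> nat set" where
  "ctype C = {j\<in>{..n}. C \<inter> sym_part n V j \<noteq> {}}"

lemma ctype_sub: "ctype C \<subseteq> {..n}" unfolding ctype_def by auto

lemma clique_part_single:
  assumes "is_clique (sym_edge n V E) C" "j \<le> n" "c \<in> C" "c \<in> sym_part n V j"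
  shows "C \<inter> sym_part n V j = {c}"
  using assms sym_edge_same unfolding is_clique_def by blast

lemma in_some_part:
  assumes "C \<subseteq> (\<Union>i\<le>n. sym_part n V i)" "c \<in> C"
  obtains j where "j \<in> ctype C" "c \<in> sym_part n V j"
  using assms unfolding ctype_def by blast

lemma card_typ:
  assumes "C \<subseteq> (\<Union>i\<le>n. sym_part n V i)" "is_clique (sym_edge n V E) C"
  shows "card (ctype C) = card C"
proof -
  have "C = (\<Union>j\<in>ctype C. C \<inter> sym_part n V j)" using assms(1) unfolding ctype_def by blast
  moreover have "card (\<Union>j\<in>ctype C. C \<inter> sym_part n V j) = (\<Sum>j\<in>ctype C. card (C \<inter> sym_part n V j))"
  proof (rule card_UN_disjoint)
    show "finite (ctype C)" unfolding ctype_def by simp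
    show "\<forall>j\<in>ctype C. finite (C \<inter> sym_part n V j)"
      using clique_part_single[OF assms(2)] unfolding ctype_def by (metis (no_types, lifting) finite.simps mem_Collect_eq all_not_in_conv IntE atMost_iff)
    show "\<forall>i\<in>ctype C. \<forall>j\<in>ctype C. i \<noteq> j \<longrightarrow> C \<inter> sym_part n V i \<inter> (C \<inter> sym_part n V j) = {}"
      using sym_part_disj unfolding ctype_def by blast
  qed
  moreover have "\<forall>j\<in>ctype C. card (C \<inter> sym_part n V j) = 1"
    using clique_part_single[OF assms(2)] unfolding ctype_def by fastforce
  ultimately show ?thesis by simp
qed

lemma proj_type:
  assumes "C \<subseteq> (\<Union>i\<le>n. sym_part n V i)" "is_clique (sym_edge n V E) C" "\<pi> permutes {..n}"
  shows "clique_of_type n V E (\<pi> ` ctype C) ((\<lambda>c. c \<pi>) ` C)"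
  unfolding clique_of_type_def
proof (intro conjI ballI)
  show "(\<lambda>c. c \<pi>) ` C \<subseteq> verts n V"
  proof
    fix x assume "x \<in> (\<lambda>c. c \<pi>) ` C"
    then obtain c where c: "c \<in> C" "x = c \<pi>" by blast
    then obtain j where j: "j \<le> n" "c \<in> sym_part n V j" using assms(1) by blast
    then show "x \<in> verts n V" unfolding verts_def using c sym_part_app[OF j(2) assms(3)]
      permutes_in_image[OF assms(3)] by auto
  qed
  show "is_clique E ((\<lambda>c. c \<pi>) ` C)"
    unfolding is_clique_def using assms(2,3) sym_edge_E unfolding is_clique_def by fastforce
next
  fix k assume "k \<in> \<pi> ` ctype C"
  then obtain j where j: "j \<in> ctype C" "k = \<pi> j" by blast
  then obtain c where c: "c \<in> C" "c \<in> sym_part n V j" "j \<le> n" unfolding ctype_def by blast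
  have "(\<lambda>c. c \<pi>) ` C \<inter> V k = {c \<pi>}"
  proof
    show "{c \<pi>} \<subseteq> (\<lambda>c. c \<pi>) ` C \<inter> V k" using c j sym_part_app[OF c(2) assms(3)] by auto
    show "(\<lambda>c. c \<pi>) ` C \<inter> V k \<subseteq> {c \<pi>}"
    proof
      fix x assume x: "x \<in> (\<lambda>c. c \<pi>) ` C \<inter> V k"
      then obtain c' where c': "c' \<in> C" "x = c' \<pi>" by blast
      then obtain j' where j': "j' \<le> n" "c' \<in> sym_part n V j'" using assms(1) by blast
      have "c' \<pi> \<in> V (\<pi> j')" using sym_part_app[OF j'(2) assms(3)] .
      then have "\<pi> j' = \<pi> j" using Vdisj x c' j c(3) j'(1) permutes_in_image[OF assms(3)] by auto
      then have "j' = j" using permutes_inj[OF assms(3)] by (simp add: inj_eq)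
      then have "c' = c" using clique_part_single[OF assms(2) c(3) c(1,2)] c' j' by blast
      then show "x \<in> {c \<pi>}" using c' by simp
    qed
  qed
  then show "card ((\<lambda>c. c \<pi>) ` C \<inter> V k) = 1" by simp
next
  fix k assume k: "k \<in> {..n} - \<pi> ` ctype C"
  show "(\<lambda>c. c \<pi>) ` C \<inter> V k = {}"
  proof (rule ccontr)
    assume "(\<lambda>c. c \<pi>) ` C \<inter> V k \<noteq> {}"
    then obtain c where c: "c \<in> C" "c \<pi> \<in> V k" by blast
    then obtain j where j: "j \<in> ctype C" "c \<in> sym_part n V j" using in_some_part[OF assms(1)] by blast
    have "j \<le> n" using j unfolding ctype_def by auto
    have "c \<pi> \<in> V (\<pi> j)" using sym_part_app[OF j(2) assms(3)] .
    then have "k = \<pi> j" using Vdisj c k \<open>j \<le> n\<close> permutes_in_image[OF assms(3)] by auto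
    then show False using k j by auto
  qed
qed

lemma link_part:
  assumes "C \<subseteq> (\<Union>i\<le>n. sym_part n V i)" "is_clique (sym_edge n V E) C" "i \<le> n" "i \<notin> ctype C"
  shows "sym_part n V i \<inter> link (\<Union>i\<le>n. sym_part n V i) (sym_edge n V E) C
       = PiE {\<pi>. \<pi> permutes {..n}} (\<lambda>\<pi>. V (\<pi> i) \<inter> link (verts n V) E ((\<lambda>c. c \<pi>) ` C))"
proof
  show "sym_part n V i \<inter> link (\<Union>i\<le>n. sym_part n V i) (sym_edge n V E) C
       \<subseteq> PiE {\<pi>. \<pi> permutes {..n}} (\<lambda>\<pi>. V (\<pi> i) \<inter> link (verts n V) E ((\<lambda>c. c \<pi>) ` C))"
  proof
    fix f assume f: "f \<in> sym_part n V i \<inter> link (\<Union>i\<le>n. sym_part n V i) (sym_edge n V E) C"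
    have "\<And>\<pi>. \<pi> permutes {..n} \<Longrightarrow> f \<pi> \<in> V (\<pi> i) \<inter> link (verts n V) E ((\<lambda>c. c \<pi>) ` C)"
    proof -
      fix \<pi> :: "nat \<Rightarrow> nat" assume p: "\<pi> permutes {..n}"
      have "f \<pi> \<in> V (\<pi> i)" using f sym_part_app p by blast
      moreover have "\<pi> i \<le> n" using permutes_in_image[OF p] assms(3) by auto
      ultimately show "f \<pi> \<in> V (\<pi> i) \<inter> link (verts n V) E ((\<lambda>c. c \<pi>) ` C)"
        using f p sym_edge_E unfolding link_def verts_def by auto
    qed
    moreover have "f \<in> extensional {\<pi>. \<pi> permutes {..n}}"
      using f unfolding sym_part_def extensional_def by auto
    ultimately show "f \<in> PiE {\<pi>. \<pi> permutes {..n}} (\<lambda>\<pi>. V (\<pi> i) \<inter> link (verts n V) E ((\<lambda>c. c \<pi>) ` C))"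
      by (auto simp: PiE_def Pi_def)
  qed
next
  show "PiE {\<pi>. \<pi> permutes {..n}} (\<lambda>\<pi>. V (\<pi> i) \<inter> link (verts n V) E ((\<lambda>c. c \<pi>) ` C))
     \<subseteq> sym_part n V i \<inter> link (\<Union>i\<le>n. sym_part n V i) (sym_edge n V E) C"
  proof
    fix f assume f: "f \<in> PiE {\<pi>. \<pi> permutes {..n}} (\<lambda>\<pi>. V (\<pi> i) \<inter> link (verts n V) E ((\<lambda>c. c \<pi>) ` C))"
    have fi: "f \<in> sym_part n V i" unfolding sym_part_PiE using f by (auto simp: PiE_def Pi_def)
    have "sym_edge n V E f c" if c: "c \<in> C" for c
    proof -
      obtain j where j: "j \<in> ctype C" "c \<in> sym_part n V j" using in_some_part[OF assms(1) c] by blast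
      have "j \<le> n" "j \<noteq> i" using j assms(4) unfolding ctype_def by auto
      moreover have "\<forall>\<pi>. \<pi> permutes {..n} \<longrightarrow> E (f \<pi>) (c \<pi>)"
        using f c unfolding link_def by (auto simp: PiE_def Pi_def)
      ultimately show ?thesis unfolding sym_edge_def using fi j assms(3) by blast
    qed
    then show "f \<in> sym_part n V i \<inter> link (\<Union>i\<le>n. sym_part n V i) (sym_edge n V E) C"
      using fi assms(3) unfolding link_def by blast
  qed
qed

lemma link_part_typ:
  assumes "C \<subseteq> (\<Union>i\<le>n. sym_part n V i)" "i \<in> ctype C"
  shows "sym_part n V i \<inter> link (\<Union>i\<le>n. sym_part n V i) (sym_edge n V E) C = {}"
  using assms sym_edge_same unfolding ctype_def link_def by blast

end

definition DD :: "nat \<Rightarrow> (nat \<Rightarrow> 'a set) \<Rightarrow> ('a \<Rightarrow> 'a \<Rightarrow> bool) \<Rightarrow> nat set \<Rightarrow> nat \<Rightarrow> nat" where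
  "DD n V E K k = (SOME d. \<forall>C. clique_of_type n V E K C \<longrightarrow> card (V k \<inter> link (verts n V) E C) = d)"

lemma DD_prop:
  assumes "partite_type_regular n V E" "K \<subset> {..n}" "k \<in> {..n} - K" "clique_of_type n V E K C"
  shows "card (V k \<inter> link (verts n V) E C) = DD n V E K k"
proof -
  have "\<exists>d. \<forall>C. clique_of_type n V E K C \<longrightarrow> card (V k \<inter> link (verts n V) E C) = d"
    using assms(1-3) unfolding partite_type_regular_def by blast
  from someI_ex[OF this] show ?thesis using assms(4) unfolding DD_def by blast
qed

lemma reindex_eq:
  fixes J J' :: "nat set" and D :: "nat set \<Rightarrow> nat \<Rightarrow> nat"
  assumes "J \<subseteq> {..n}" "J' \<subseteq> {..n}" "card J = card J'" "i \<le> n" "i' \<le> n" "i \<notin> J" "i' \<notin> J'"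
  shows "(\<Prod>\<pi>\<in>{\<pi>. \<pi> permutes {..n}}. D (\<pi> ` J) (\<pi> i)) = (\<Prod>\<pi>\<in>{\<pi>. \<pi> permutes {..n}}. D (\<pi> ` J') (\<pi> i'))"
proof -
  obtain \<tau> where t: "\<tau> permutes {..n}" "\<tau> ` J' = J" "\<tau> i' = i" using exists_perm[OF assms] by blast
  show ?thesis
  proof (rule prod.reindex_bij_witness[where j = "\<lambda>\<sigma>. \<sigma> \<circ> \<tau>" and i = "\<lambda>\<sigma>. \<sigma> \<circ> inv \<tau>"])
    fix a assume a: "a \<in> {\<pi>. \<pi> permutes {..n}}"
    show "a \<circ> \<tau> \<circ> inv \<tau> = a" using permutes_inv_o(1)[OF t(1)] by (simp add: o_assoc[symmetric])
    show "a \<circ> \<tau> \<in> {\<pi>. \<pi> permutes {..n}}" using a permutes_compose t(1) by blast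
    show "D ((a \<circ> \<tau>) ` J') ((a \<circ> \<tau>) i') = D (a ` J) (a i)"
      by (simp only: image_comp[symmetric] t(2) o_apply t(3))
  next
    fix b assume b: "b \<in> {\<pi>. \<pi> permutes {..n}}"
    show "b \<circ> inv \<tau> \<circ> \<tau> = b" using permutes_inv_o(2)[OF t(1)] by (simp add: o_assoc[symmetric])
    show "b \<circ> inv \<tau> \<in> {\<pi>. \<pi> permutes {..n}}" using b permutes_compose permutes_inv t(1) by blast
  qed
qed


lemma link_card:
  assumes pg: "partite_graph n V E" and fin: "\<forall>i\<le>n. finite (V i)" and ptr: "partite_type_regular n V E"
    and C: "C \<subseteq> (\<Union>i\<le>n. sym_part n V i)" "is_clique (sym_edge n V E) C" "card C \<le> n"
  shows "card (link (\<Union>i\<le>n. sym_part n V i) (sym_edge n V E) C)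
     = (\<Sum>i\<in>{..n} - ctype n V C. \<Prod>\<pi>\<in>{\<pi>. \<pi> permutes {..n}}. DD n V E (\<pi> ` ctype n V C) (\<pi> i))"
proof -
  let ?Vs = "\<Union>i\<le>n. sym_part n V i" and ?L = "link (\<Union>i\<le>n. sym_part n V i) (sym_edge n V E) C"
  let ?J = "ctype n V C" and ?P = "{\<pi>. \<pi> permutes {..n}}"
  have J: "?J \<subseteq> {..n}" by (rule ctype_sub[OF pg])
  have cJ: "card ?J = card C" using card_typ[OF pg C(1,2)] .
  have "?L = (\<Union>i\<le>n. sym_part n V i \<inter> ?L)" unfolding link_def by blast
  moreover have "card (\<Union>i\<le>n. sym_part n V i \<inter> ?L) = (\<Sum>i\<le>n. card (sym_part n V i \<inter> ?L))"
    by (rule card_UN_disjoint) (use finite_sym_part[OF pg fin] sym_part_disj[OF pg] in auto)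
  moreover have "(\<Sum>i\<le>n. card (sym_part n V i \<inter> ?L)) = (\<Sum>i\<in>{..n} - ?J. card (sym_part n V i \<inter> ?L))"
    by (rule sum.mono_neutral_right) (use link_part_typ[OF pg C(1)] in auto)
  moreover have "card (sym_part n V i \<inter> ?L) = (\<Prod>\<pi>\<in>?P. DD n V E (\<pi> ` ?J) (\<pi> i))"
    if i: "i \<in> {..n} - ?J" for i
  proof -
    have "card (sym_part n V i \<inter> ?L) = (\<Prod>\<pi>\<in>?P. card (V (\<pi> i) \<inter> link (verts n V) E ((\<lambda>c. c \<pi>) ` C)))"
      using i link_part[OF pg C(1,2), of i] by (simp add: card_PiE finite_permutations)
    also have "... = (\<Prod>\<pi>\<in>?P. DD n V E (\<pi> ` ?J) (\<pi> i))"
    proof (rule prod.cong[OF refl])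
      fix \<pi> assume p: "\<pi> \<in> ?P"
      then have p': "\<pi> permutes {..n}" by simp
      have sub: "\<pi> ` ?J \<subseteq> {..n}" using J permutes_in_image[OF p'] by auto
      have "\<pi> i \<in> {..n} - \<pi> ` ?J" using i permutes_in_image[OF p'] permutes_inj[OF p'] J
        by (auto simp: inj_eq)
      moreover have "\<pi> ` ?J \<subset> {..n}" using sub calculation by auto
      ultimately show "card (V (\<pi> i) \<inter> link (verts n V) E ((\<lambda>c. c \<pi>) ` C)) = DD n V E (\<pi> ` ?J) (\<pi> i)"
        using DD_prop[OF ptr _ _ proj_type[OF pg C(1,2) p']] by blast
    qed
    finally show ?thesis .
  qed
  ultimately show ?thesis by simp
qed

theorem mainTheorem9:
  fixes n :: nat and V :: "nat \<Rightarrow> 'a set" and E :: "'a \<Rightarrow> 'a \<Rightarrow> bool"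
  assumes "partite_graph n V E"
    and "\<forall>i\<le>n. finite (V i)"
    and "partite_type_regular n V E"
  shows "hyper_regular n (\<Union>i\<le>n. sym_part n V i) (sym_edge n V E)"
  unfolding hyper_regular_def
proof (intro allI impI)
  fix m assume m: "1 \<le> m \<and> m \<le> n"
  let ?P = "{\<pi>. \<pi> permutes {..n}}"
  let ?T = "\<Prod>\<pi>\<in>?P. DD n V E (\<pi> ` {..<m}) (\<pi> m)"
  show "\<exists>d. \<forall>C. C \<subseteq> (\<Union>i\<le>n. sym_part n V i) \<and> is_clique (sym_edge n V E) C \<and> card C = m \<longrightarrow>
          card (link (\<Union>i\<le>n. sym_part n V i) (sym_edge n V E) C) = d"
  proof (intro exI allI impI)
    fix C assume C: "C \<subseteq> (\<Union>i\<le>n. sym_part n V i) \<and> is_clique (sym_edge n V E) C \<and> card C = m"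
    let ?J = "ctype n V C"
    have J: "?J \<subseteq> {..n}" by (rule ctype_sub[OF assms(1)])
    have cJ: "card ?J = m" using card_typ[OF assms(1)] C by auto
    have "card (link (\<Union>i\<le>n. sym_part n V i) (sym_edge n V E) C)
     = (\<Sum>i\<in>{..n} - ?J. \<Prod>\<pi>\<in>?P. DD n V E (\<pi> ` ?J) (\<pi> i))"
      using link_card[OF assms] C m by auto
    also have "... = (\<Sum>i\<in>{..n} - ?J. ?T)"
      by (rule sum.cong[OF refl], rule reindex_eq) (use J cJ m in auto)
    also have "... = (Suc n - m) * ?T"
      using J cJ by (simp add: card_Diff_subset finite_subset)
    finally show "card (link (\<Union>i\<le>n. sym_part n V i) (sym_edge n V E) C) = (Suc n - m) * ?T" .
  qed
qed

end
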